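(* Let $(a_n)_{n\ge 1}$ be a sequence of strictly positive real numbers with $\sum_{n\ge1}(1+n^2)^5a_n^2<\infty$. Let $H=\mathbb{R}\times l^2\times l^2$ and let $F:H\to H$ be defined, for $y=(x,(u_n)_{n\ge1},(v_n)_{n\ge1})\in H$, by $$F(y)=\Big(\sum_{n\ge1} n a_n^{1/2}\big(\sin(nx)u_n+\cos(nx)v_n\big),\ \big(a_n^{1/2}\cos(nx)\big)_{n\ge1},\ \big(-a_n^{1/2}\sin(nx)\big)_{n\ge1}\Big).$$ Let $W$ be a cylindrical Wiener process on $H$ and $\sigma$ the projection onto the first coordinate. For $z\in H$ let $Y(t,z)$ denote the unique strong solution of $dY_t=F(Y_t)\,dt+\sigma\,dW_t$, $Y_0=z$. Let $(y_k)_{k\in\mathbb{N}}$ be a sequence in $H$ with $y_k\to y$ in $H$, and write $Y_k(t)=Y(t,y_k)$, $Y(t)=Y(t,y)$ (all driven by the same $W$). Then for every $t>0$, $$\|Y_k(t)-Y(t)\|_H^2\to0\quad\text{as }k\to\infty.$$ In particular $(Y_t)_{t\ge0}$ is a Feller process: the transition semigroup $P_t\varphi(z)=\mathbb{E}[\varphi(Y(t,z))]$ maps bounded continuous functions on $H$ into bounded continuous functions on $H$.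
   Context: $H=\mathbb{R}\times l^2\times l^2$ is the Hilbert space with norm $\|y\|_H^2=|x|^2+\|(u_n)_n\|_{l^2}^2+\|(v_n)_n\|_{l^2}^2$. Existence and uniqueness of a strong solution $Y(\cdot,z)\in C([0,\infty);H)$ for each $z\in H$ is known. $\sigma W_t=(\beta_t,0,0)$ with $\beta$ a standard one-dimensional Brownian motion. *)

theory Defs
  imports "HOL-Probability.Probability"
begin

text \<open>The Hilbert space H = R x l2 x l2. Sequences (u_n) with n >= 1 are represented by
  functions u :: nat => real with u k standing for u_(k+1) (0-based re-indexing).\<close>

type_synonym H = "real \<times> (nat \<Rightarrow> real) \<times> (nat \<Rightarrow> real)"

definition in_l2 :: "(nat \<Rightarrow> real) \<Rightarrow> bool" where
  "in_l2 u \<longleftrightarrow> summable (\<lambda>k. (u k)\<^sup>2)"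

definition inH :: "H \<Rightarrow> bool" where
  "inH y \<longleftrightarrow> in_l2 (fst (snd y)) \<and> in_l2 (snd (snd y))"

definition distH :: "H \<Rightarrow> H \<Rightarrow> real" where
  "distH y z = sqrt ((fst y - fst z)\<^sup>2
                    + (\<Sum>k. (fst (snd y) k - fst (snd z) k)\<^sup>2)
                    + (\<Sum>k. (snd (snd y) k - snd (snd z) k)\<^sup>2))"

text \<open>The drift F; a k stands for a_(k+1), so the factor n is real (Suc k).\<close>
definition driftF :: "(nat \<Rightarrow> real) \<Rightarrow> H \<Rightarrow> H" where
  "driftF a y = (let x = fst y; u = fst (snd y); v = snd (snd y) in
     ((\<Sum>k. real (Suc k) * sqrt (a k) *
              (sin (real (Suc k) * x) * u k + cos (real (Suc k) * x) * v k)),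
      (\<lambda>k. sqrt (a k) * cos (real (Suc k) * x)),
      (\<lambda>k. - sqrt (a k) * sin (real (Suc k) * x))))"

definition path_contH :: "(real \<Rightarrow> H) \<Rightarrow> bool" where
  "path_contH p \<longleftrightarrow> (\<forall>t\<ge>0. \<forall>e>0. \<exists>d>0. \<forall>s\<ge>0. \<bar>s - t\<bar> < d \<longrightarrow> distH (p s) (p t) < e)"

definition contH :: "(H \<Rightarrow> real) \<Rightarrow> bool" where
  "contH f \<longleftrightarrow> (\<forall>y. inH y \<longrightarrow> (\<forall>e>0. \<exists>d>0. \<forall>y'. inH y' \<and> distH y' y < d \<longrightarrow> \<bar>f y' - f y\<bar> < e))"

definition boundedH :: "(H \<Rightarrow> real) \<Rightarrow> bool" where
  "boundedH f \<longleftrightarrow> (\<exists>B. \<forall>y. inH y \<longrightarrow> \<bar>f y\<bar> \<le> B)"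

definition std_brownian_motion :: "'w measure \<Rightarrow> (real \<Rightarrow> 'w \<Rightarrow> real) \<Rightarrow> bool" where
  "std_brownian_motion M \<beta> \<longleftrightarrow>
     prob_space M \<and>
     (\<forall>t. \<beta> t \<in> borel_measurable M) \<and>
     (\<forall>\<omega>\<in>space M. \<beta> 0 \<omega> = 0 \<and> continuous_on {0..} (\<lambda>t. \<beta> t \<omega>)) \<and>
     (\<forall>s t. 0 \<le> s \<and> s < t \<longrightarrow>
        distributed M lborel (\<lambda>\<omega>. \<beta> t \<omega> - \<beta> s \<omega>)
          (\<lambda>x. ennreal (normal_density 0 (sqrt (t - s)) x))) \<and>
     (\<forall>(ts :: nat \<Rightarrow> real) n. 0 \<le> ts 0 \<and> (\<forall>i<n. ts i < ts (Suc i)) \<longrightarrow>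
        prob_space.indep_vars M (\<lambda>_. borel) (\<lambda>i \<omega>. \<beta> (ts (Suc i)) \<omega> - \<beta> (ts i) \<omega>) {..<n})"

text \<open>Strong solution of dY = F(Y) dt + sigma dW, Y_0 = z, where sigma W_t = (beta_t, 0, 0).
  The H-valued time integral is written componentwise.\<close>
definition strong_solution ::
  "'w measure \<Rightarrow> (real \<Rightarrow> 'w \<Rightarrow> real) \<Rightarrow> (nat \<Rightarrow> real) \<Rightarrow> H \<Rightarrow> (real \<Rightarrow> 'w \<Rightarrow> H) \<Rightarrow> bool" where
  "strong_solution M \<beta> a z Y \<longleftrightarrow>
     (\<forall>t\<ge>0. \<forall>\<omega>\<in>space M. inH (Y t \<omega>)) \<and>
     (\<forall>t\<ge>0. (\<lambda>\<omega>. fst (Y t \<omega>)) \<in> borel_measurable M \<and>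
             (\<forall>k. (\<lambda>\<omega>. fst (snd (Y t \<omega>)) k) \<in> borel_measurable M) \<and>
             (\<forall>k. (\<lambda>\<omega>. snd (snd (Y t \<omega>)) k) \<in> borel_measurable M)) \<and>
     (AE \<omega> in M.
        path_contH (\<lambda>t. Y t \<omega>) \<and>
        (\<forall>t\<ge>0.
           fst (Y t \<omega>) = fst z + integral {0..t} (\<lambda>s. fst (driftF a (Y s \<omega>))) + \<beta> t \<omega> \<and>
           (\<forall>k. fst (snd (Y t \<omega>)) k
                  = fst (snd z) k + integral {0..t} (\<lambda>s. fst (snd (driftF a (Y s \<omega>))) k)) \<and>
           (\<forall>k. snd (snd (Y t \<omega>)) k
                  = snd (snd z) k + integral {0..t} (\<lambda>s. snd (snd (driftF a (Y s \<omega>))) k))))"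

end

theory Submission
  imports Defs
begin


definition nrm :: "(nat \<Rightarrow> real) \<Rightarrow> real" where
  "nrm f = sqrt (\<Sum>k. (f k)\<^sup>2)"

lemma summable_le: "summable g \<Longrightarrow> (\<And>n. norm (f n) \<le> g n) \<Longrightarrow> summable (f::nat\<Rightarrow>real)"
  by (rule summable_comparison_test'[where N=0]) auto
lemma two_abs_mult_le: "2 * (\<bar>x\<bar> * \<bar>y\<bar>) \<le> x\<^sup>2 + (y::real)\<^sup>2"
proof -
  have "0 \<le> (\<bar>x\<bar> - \<bar>y\<bar>)\<^sup>2" by simp
  also have "(\<bar>x\<bar> - \<bar>y\<bar>)\<^sup>2 = x\<^sup>2 + y\<^sup>2 - 2 * (\<bar>x\<bar> * \<bar>y\<bar>)"
    by (simp add: power2_diff)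
  finally show ?thesis by simp
qed
lemma sq_sum_abs_le: "(\<bar>x\<bar> + \<bar>y\<bar>)\<^sup>2 \<le> 2 * x\<^sup>2 + 2 * (y::real)\<^sup>2"
proof -
  have "(\<bar>x\<bar> + \<bar>y\<bar>)\<^sup>2 = x\<^sup>2 + y\<^sup>2 + 2 * (\<bar>x\<bar> * \<bar>y\<bar>)"
    by (simp add: power2_sum)
  then show ?thesis using two_abs_mult_le[of x y] by simp
qed

lemma nrm_nonneg: "in_l2 f \<Longrightarrow> nrm f \<ge> 0"
  unfolding nrm_def in_l2_def by (simp add: suminf_nonneg)

lemma nrm_sq: "in_l2 f \<Longrightarrow> (nrm f)\<^sup>2 = (\<Sum>k. (f k)\<^sup>2)"
  unfolding nrm_def in_l2_def by (simp add: suminf_nonneg)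

lemma partial_le_nrm:
  assumes "in_l2 f" shows "L2_set f {..<n} \<le> nrm f"
  unfolding L2_set_def nrm_def
  using assms unfolding in_l2_def
  by (intro real_sqrt_le_mono sum_le_suminf) auto

lemma le_nrm_from_partial:
  assumes "in_l2 f" and "\<And>n. L2_set f {..<n} \<le> c" shows "nrm f \<le> c"
proof -
  have c0: "c \<ge> 0" using assms(2)[of 0] by (simp add: L2_set_def)
  have "(\<Sum>k<n. (f k)\<^sup>2) \<le> c\<^sup>2" for n
    using assms(2)[of n] unfolding L2_set_def
    using c0 by (metis real_sqrt_le_iff real_sqrt_abs abs_of_nonneg)
  then have "(\<Sum>k. (f k)\<^sup>2) \<le> c\<^sup>2"
    using assms(1) unfolding in_l2_def by (intro suminf_le_const) auto
  then show ?thesis unfolding nrm_def using c0 by (simp add: real_sqrt_le_iff real_le_lsqrt)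
qed

lemma in_l2_bound:
  assumes "in_l2 g" "in_l2 h" "\<And>k. \<bar>f k\<bar> \<le> \<bar>g k\<bar> + \<bar>h k\<bar>"
  shows "in_l2 f"
proof -
  have bd: "(f k)\<^sup>2 \<le> 2 * (g k)\<^sup>2 + 2 * (h k)\<^sup>2" for k
  proof -
    have "\<bar>f k\<bar>\<^sup>2 \<le> (\<bar>g k\<bar> + \<bar>h k\<bar>)\<^sup>2" using assms(3)[of k]
      by (intro power_mono) auto
    then have "(f k)\<^sup>2 \<le> (\<bar>g k\<bar> + \<bar>h k\<bar>)\<^sup>2" by (simp only: power2_abs)
    also have "\<dots> \<le> 2 * (g k)\<^sup>2 + 2 * (h k)\<^sup>2" by (rule sq_sum_abs_le)
    finally show ?thesis .
  qed
  have sm: "summable (\<lambda>k. 2 * (g k)\<^sup>2 + 2 * (h k)\<^sup>2)"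
    using summable_add[OF summable_mult[OF assms(1)[unfolded in_l2_def]] summable_mult[OF assms(2)[unfolded in_l2_def]], of 2 2] .
  show ?thesis unfolding in_l2_def
    by (rule summable_le[OF sm]) (simp add: bd)
qed

lemma nrm_bound:
  assumes "in_l2 g" "in_l2 h" "\<And>k. \<bar>f k\<bar> \<le> \<bar>g k\<bar> + \<bar>h k\<bar>"
  shows "in_l2 f" "nrm f \<le> nrm g + nrm h"
proof -
  show f: "in_l2 f" by (rule in_l2_bound[OF assms])
  show "nrm f \<le> nrm g + nrm h"
  proof (rule le_nrm_from_partial[OF f])
    fix n
    have "L2_set f {..<n} = L2_set (\<lambda>k. \<bar>f k\<bar>) {..<n}" by (simp add: L2_set_def)
    also have "\<dots> \<le> L2_set (\<lambda>k. \<bar>g k\<bar> + \<bar>h k\<bar>) {..<n}"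
      by (rule L2_set_mono) (use assms(3) in auto)
    also have "\<dots> \<le> L2_set (\<lambda>k. \<bar>g k\<bar>) {..<n} + L2_set (\<lambda>k. \<bar>h k\<bar>) {..<n}"
      by (rule L2_set_triangle_ineq)
    also have "\<dots> = L2_set g {..<n} + L2_set h {..<n}"
      by (simp add: L2_set_def)
    also have "\<dots> \<le> nrm g + nrm h"
      using partial_le_nrm[OF assms(1)] partial_le_nrm[OF assms(2)] by (intro add_mono)
    finally show "L2_set f {..<n} \<le> nrm g + nrm h" .
  qed
qed

lemma nrm_zero: "nrm (\<lambda>k. 0) = 0" by (simp add: nrm_def)
lemma in_l2_zero: "in_l2 (\<lambda>k. 0)" by (simp add: in_l2_def)

lemma nrm_mono:
  assumes "in_l2 g" "\<And>k. \<bar>f k\<bar> \<le> \<bar>g k\<bar>"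
  shows "in_l2 f" "nrm f \<le> nrm g"
  using nrm_bound[OF assms(1) in_l2_zero, of f] assms(2) by (auto simp: nrm_zero)

lemma in_l2_diff: "in_l2 f \<Longrightarrow> in_l2 g \<Longrightarrow> in_l2 (\<lambda>k. f k - g k)"
  by (rule in_l2_bound[of f g]) auto

lemma in_l2_scale: "in_l2 f \<Longrightarrow> in_l2 (\<lambda>k. c * f k)"
  unfolding in_l2_def by (simp add: power_mult_distrib summable_mult)

lemma nrm_scale: "in_l2 f \<Longrightarrow> nrm (\<lambda>k. c * f k) = \<bar>c\<bar> * nrm f"
  unfolding in_l2_def nrm_def
  by (simp add: power_mult_distrib suminf_mult real_sqrt_mult)

lemma CS:
  assumes "in_l2 f" "in_l2 g"
  shows "summable (\<lambda>k. \<bar>f k\<bar> * \<bar>g k\<bar>)" "(\<Sum>k. \<bar>f k\<bar> * \<bar>g k\<bar>) \<le> nrm f * nrm g"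
proof -
  have b: "\<bar>f k\<bar> * \<bar>g k\<bar> \<le> (f k)\<^sup>2 + (g k)\<^sup>2" for k
  proof -
    have "2 * (\<bar>f k\<bar> * \<bar>g k\<bar>) \<le> (f k)\<^sup>2 + (g k)\<^sup>2" by (rule two_abs_mult_le)
    moreover have "0 \<le> \<bar>f k\<bar> * \<bar>g k\<bar>" by simp
    ultimately show ?thesis by linarith
  qed
  show s: "summable (\<lambda>k. \<bar>f k\<bar> * \<bar>g k\<bar>)"
    using summable_le[OF summable_add[OF assms[unfolded in_l2_def]]] b by simp
  show "(\<Sum>k. \<bar>f k\<bar> * \<bar>g k\<bar>) \<le> nrm f * nrm g"
  proof (rule suminf_le_const[OF s])
    fix n
    have "(\<Sum>k<n. \<bar>f k\<bar> * \<bar>g k\<bar>) \<le> L2_set f {..<n} * L2_set g {..<n}"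
      by (rule L2_set_mult_ineq)
    also have "\<dots> \<le> nrm f * nrm g"
      using partial_le_nrm[OF assms(1)] partial_le_nrm[OF assms(2)]
      by (intro mult_mono) (auto simp: nrm_nonneg assms)
    finally show "(\<Sum>k<n. \<bar>f k\<bar> * \<bar>g k\<bar>) \<le> nrm f * nrm g" .
  qed
qed

definition du :: "H \<Rightarrow> H \<Rightarrow> nat \<Rightarrow> real" where
  "du p q = (\<lambda>k. fst (snd p) k - fst (snd q) k)"
definition dv :: "H \<Rightarrow> H \<Rightarrow> nat \<Rightarrow> real" where
  "dv p q = (\<lambda>k. snd (snd p) k - snd (snd q) k)"

lemma in_l2_du: "inH p \<Longrightarrow> inH q \<Longrightarrow> in_l2 (du p q)"
  unfolding du_def inH_def by (auto intro: in_l2_diff)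
lemma in_l2_dv: "inH p \<Longrightarrow> inH q \<Longrightarrow> in_l2 (dv p q)"
  unfolding dv_def inH_def by (auto intro: in_l2_diff)

lemma distH_alt:
  assumes "inH p" "inH q"
  shows "distH p q = sqrt ((fst p - fst q)\<^sup>2 + (nrm (du p q))\<^sup>2 + (nrm (dv p q))\<^sup>2)"
  using nrm_sq[OF in_l2_du[OF assms]] nrm_sq[OF in_l2_dv[OF assms]]
  unfolding distH_def du_def dv_def by simp

lemma distH_ge:
  assumes "inH p" "inH q"
  shows "\<bar>fst p - fst q\<bar> \<le> distH p q" "nrm (du p q) \<le> distH p q" "nrm (dv p q) \<le> distH p q"
    "distH p q \<le> \<bar>fst p - fst q\<bar> + nrm (du p q) + nrm (dv p q)" "distH p q \<ge> 0"
proof -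
  let ?a = "\<bar>fst p - fst q\<bar>" and ?b = "nrm (du p q)" and ?c = "nrm (dv p q)"
  have b0: "?b \<ge> 0" "?c \<ge> 0" using nrm_nonneg in_l2_du[OF assms] in_l2_dv[OF assms] by auto
  have d: "distH p q = sqrt (?a\<^sup>2 + ?b\<^sup>2 + ?c\<^sup>2)" using distH_alt[OF assms] by simp
  show "?a \<le> distH p q" unfolding d by (rule real_le_rsqrt) auto
  show "?b \<le> distH p q" unfolding d by (rule real_le_rsqrt) auto
  show "?c \<le> distH p q" unfolding d by (rule real_le_rsqrt) auto
  show "distH p q \<ge> 0" unfolding d by simp
  have "?a\<^sup>2 + ?b\<^sup>2 + ?c\<^sup>2 \<le> (?a + ?b + ?c)\<^sup>2"
    using b0 by (simp add: power2_sum)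
  then have "sqrt (?a\<^sup>2 + ?b\<^sup>2 + ?c\<^sup>2) \<le> sqrt ((?a + ?b + ?c)\<^sup>2)" by (rule real_sqrt_le_mono)
  also have "\<dots> = ?a + ?b + ?c" using b0 by simp
  finally show "distH p q \<le> ?a + ?b + ?c" unfolding d .
qed

lemma distH_sym: "distH p q = distH q p"
  unfolding distH_def by (simp add: power2_commute)


lemma abs_sin_diff: "\<bar>sin x - sin y\<bar> \<le> \<bar>x - (y::real)\<bar>"
proof -
  have "\<bar>sin x - sin y\<bar> = 2 * \<bar>sin ((x - y) / 2)\<bar> * \<bar>cos ((x + y) / 2)\<bar>"
    by (simp add: sin_diff_sin abs_mult)
  also have "\<dots> \<le> 2 * \<bar>(x - y) / 2\<bar> * 1"
    by (intro mult_mono abs_sin_x_le_abs_x) auto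
  finally show ?thesis by simp
qed

lemma abs_cos_diff: "\<bar>cos x - cos y\<bar> \<le> \<bar>x - (y::real)\<bar>"
proof -
  have "\<bar>cos x - cos y\<bar> = 2 * \<bar>sin ((x + y) / 2)\<bar> * \<bar>sin ((y - x) / 2)\<bar>"
    by (simp add: cos_diff_cos abs_mult)
  also have "\<dots> \<le> 2 * 1 * \<bar>(y - x) / 2\<bar>"
    by (intro mult_mono abs_sin_x_le_abs_x) auto
  finally show ?thesis by simp
qed

context
  fixes a :: "nat \<Rightarrow> real"
  assumes a_pos: "\<And>k. a k > 0"
    and a_sum: "summable (\<lambda>k. (1 + (real (Suc k))\<^sup>2) ^ 5 * (a k)\<^sup>2)"
begin

lemma sa4: "summable (\<lambda>k. (real (Suc k))^4 * a k)"
proof -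
  have inv: "summable (\<lambda>k. inverse ((real (Suc k))^2))"
  proof -
    have "summable (\<lambda>n. inverse (real n ^ 2))" by (rule inverse_power_summable) simp
    then show ?thesis using summable_Suc_iff[of "\<lambda>n. inverse (real n ^ 2)"] by simp
  qed
  have b: "(real (Suc k))^4 * a k \<le> (1 + (real (Suc k))\<^sup>2) ^ 5 * (a k)\<^sup>2 + inverse ((real (Suc k))^2)" for k
  proof -
    define n where "n = real (Suc k)"
    have n1: "n \<ge> 1" by (simp add: n_def)
    define X where "X = n^5 * a k"
    define Z where "Z = inverse n"
    have X0: "X \<ge> 0" and Z0: "Z \<ge> 0" using n1 a_pos[of k] by (auto simp: X_def Z_def less_imp_le)
    have e5: "n^5 = n * n^4" by (simp add: eval_nat_numeral)
    have "X * Z = n^4 * a k" unfolding X_def Z_def e5 using n1 by simp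
    moreover have "X * Z \<le> X\<^sup>2 + Z\<^sup>2"
    proof -
      have h: "2 * (X * Z) \<le> X\<^sup>2 + Z\<^sup>2" using two_abs_mult_le[of X Z] X0 Z0 by (simp add: abs_of_nonneg)
      show ?thesis using h mult_nonneg_nonneg[OF X0 Z0] by linarith
    qed
    moreover have "X\<^sup>2 \<le> (1 + n\<^sup>2) ^ 5 * (a k)\<^sup>2"
    proof -
      have "X\<^sup>2 = (n\<^sup>2)^5 * (a k)\<^sup>2" unfolding X_def by (simp only: power_mult_distrib flip: power_mult) simp
      also have "\<dots> \<le> (1 + n\<^sup>2) ^ 5 * (a k)\<^sup>2" by (intro mult_right_mono power_mono) auto
      finally show ?thesis .
    qed
    moreover have "Z\<^sup>2 = inverse ((real (Suc k))^2)" by (simp add: Z_def n_def power_inverse)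
    ultimately show ?thesis unfolding n_def by linarith
  qed
  have nn: "norm ((real (Suc k))^4 * a k) = (real (Suc k))^4 * a k" for k
    using a_pos[of k] by simp
  show ?thesis
    by (rule summable_le[OF summable_add[OF a_sum inv]]) (simp only: nn b)
qed

lemma sa2: "summable (\<lambda>k. (real (Suc k))^2 * a k)"
proof (rule summable_le[OF sa4])
  fix k
  have "(real (Suc k))^2 \<le> (real (Suc k))^4" by (rule power_increasing) auto
  then show "norm ((real (Suc k))^2 * a k) \<le> (real (Suc k))^4 * a k"
    using a_pos[of k] by (simp add: abs_of_nonneg less_imp_le)
qed

lemma sa0: "summable a"
proof (rule summable_le[OF sa4])
  fix k
  have "1 \<le> (real (Suc k))^4" by (rule one_le_power) auto
  then show "norm (a k) \<le> (real (Suc k))^4 * a k"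
    using a_pos[of k] by (simp add: abs_of_nonneg less_imp_le)
qed

definition "A0 = (\<Sum>k. a k)"
definition "S2 = sqrt (\<Sum>k. (real (Suc k))^2 * a k)"
definition "S4 = sqrt (\<Sum>k. (real (Suc k))^4 * a k)"

lemma l2_a0: "in_l2 (\<lambda>k. sqrt (a k))" "nrm (\<lambda>k. sqrt (a k)) = sqrt A0"
  using sa0 a_pos by (auto simp: in_l2_def nrm_def A0_def less_imp_le)

lemma l2_a2: "in_l2 (\<lambda>k. real (Suc k) * sqrt (a k))" "nrm (\<lambda>k. real (Suc k) * sqrt (a k)) = S2"
  using sa2 a_pos by (auto simp: in_l2_def nrm_def S2_def less_imp_le power_mult_distrib)

lemma l2_a4: "in_l2 (\<lambda>k. (real (Suc k))^2 * sqrt (a k))" "nrm (\<lambda>k. (real (Suc k))^2 * sqrt (a k)) = S4"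
  using sa4 a_pos by (auto simp: in_l2_def nrm_def S4_def less_imp_le power_mult_distrib simp flip: power_mult)

lemma S2_nonneg: "S2 \<ge> 0" using nrm_nonneg[OF l2_a2(1)] l2_a2(2) by simp
lemma S4_nonneg: "S4 \<ge> 0" using nrm_nonneg[OF l2_a4(1)] l2_a4(2) by simp
lemma A0_nonneg: "A0 \<ge> 0" unfolding A0_def using sa0 a_pos by (intro suminf_nonneg) (auto simp: less_imp_le)

end


definition bterm :: "(nat \<Rightarrow> real) \<Rightarrow> H \<Rightarrow> nat \<Rightarrow> real" where
  "bterm a p k = real (Suc k) * sqrt (a k) *
     (sin (real (Suc k) * fst p) * fst (snd p) k + cos (real (Suc k) * fst p) * snd (snd p) k)"

lemma fst_driftF: "fst (driftF a p) = (\<Sum>k. bterm a p k)"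
  by (simp add: driftF_def Let_def bterm_def)

lemma fst_snd_driftF: "fst (snd (driftF a p)) k = sqrt (a k) * cos (real (Suc k) * fst p)"
  by (simp add: driftF_def Let_def)

lemma snd_snd_driftF: "snd (snd (driftF a p)) k = - sqrt (a k) * sin (real (Suc k) * fst p)"
  by (simp add: driftF_def Let_def)

lemma bterm_diff_bound:
  fixes a :: "nat \<Rightarrow> real" and p q :: H
  assumes ak: "a k \<ge> 0"
  shows "\<bar>bterm a p k - bterm a q k\<bar> \<le>
      \<bar>fst p - fst q\<bar> * (\<bar>(real (Suc k))^2 * sqrt (a k)\<bar> * \<bar>fst (snd p) k\<bar>
                         + \<bar>(real (Suc k))^2 * sqrt (a k)\<bar> * \<bar>snd (snd p) k\<bar>)
      + \<bar>real (Suc k) * sqrt (a k)\<bar> * \<bar>du p q k\<bar> + \<bar>real (Suc k) * sqrt (a k)\<bar> * \<bar>dv p q k\<bar>"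
proof -
  define n where "n = real (Suc k)"
  define c where "c = n * sqrt (a k)"
  have n0: "n \<ge> 0" and c0: "c \<ge> 0" using ak by (auto simp: n_def c_def)
  define s1 where "s1 = sin (n * fst p)"
  define s2 where "s2 = sin (n * fst q)"
  define k1 where "k1 = cos (n * fst p)"
  define k2 where "k2 = cos (n * fst q)"
  define up where "up = fst (snd p) k"
  define uq where "uq = fst (snd q) k"
  define vp where "vp = snd (snd p) k"
  define vq where "vq = snd (snd q) k"
  define dx where "dx = \<bar>fst p - fst q\<bar>"
  have ds: "\<bar>s1 - s2\<bar> \<le> n * dx"
    using abs_sin_diff[of "n * fst p" "n * fst q"] n0
    by (simp add: s1_def s2_def dx_def flip: right_diff_distrib abs_mult_pos) (simp add: abs_mult)
  have dk: "\<bar>k1 - k2\<bar> \<le> n * dx"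
    using abs_cos_diff[of "n * fst p" "n * fst q"] n0
    by (simp add: k1_def k2_def dx_def flip: right_diff_distrib abs_mult_pos) (simp add: abs_mult)
  have s2b: "\<bar>s2\<bar> \<le> 1" and k2b: "\<bar>k2\<bar> \<le> 1" by (auto simp: s2_def k2_def)
  have eq: "bterm a p k - bterm a q k = c * ((s1 - s2) * up + s2 * (up - uq) + (k1 - k2) * vp + k2 * (vp - vq))"
    by (simp add: bterm_def c_def n_def s1_def s2_def k1_def k2_def up_def uq_def vp_def vq_def algebra_simps)
  have "\<bar>(s1 - s2) * up + s2 * (up - uq) + (k1 - k2) * vp + k2 * (vp - vq)\<bar>
        \<le> \<bar>s1 - s2\<bar> * \<bar>up\<bar> + \<bar>s2\<bar> * \<bar>up - uq\<bar> + \<bar>k1 - k2\<bar> * \<bar>vp\<bar> + \<bar>k2\<bar> * \<bar>vp - vq\<bar>"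
    by (simp add: abs_mult[symmetric] abs_triangle_ineq4 order_trans[OF abs_triangle_ineq] add_mono)
  also have "\<dots> \<le> (n * dx) * \<bar>up\<bar> + 1 * \<bar>up - uq\<bar> + (n * dx) * \<bar>vp\<bar> + 1 * \<bar>vp - vq\<bar>"
    by (intro add_mono mult_right_mono ds dk s2b k2b) auto
  finally have h: "\<bar>(s1 - s2) * up + s2 * (up - uq) + (k1 - k2) * vp + k2 * (vp - vq)\<bar>
        \<le> (n * dx) * \<bar>up\<bar> + \<bar>up - uq\<bar> + (n * dx) * \<bar>vp\<bar> + \<bar>vp - vq\<bar>" by simp
  have "\<bar>bterm a p k - bterm a q k\<bar> \<le> c * ((n * dx) * \<bar>up\<bar> + \<bar>up - uq\<bar> + (n * dx) * \<bar>vp\<bar> + \<bar>vp - vq\<bar>)"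
    unfolding eq abs_mult using c0 h by (simp add: mult_left_mono)
  also have "\<dots> = dx * (\<bar>n^2 * sqrt (a k)\<bar> * \<bar>up\<bar> + \<bar>n^2 * sqrt (a k)\<bar> * \<bar>vp\<bar>)
      + \<bar>n * sqrt (a k)\<bar> * \<bar>up - uq\<bar> + \<bar>n * sqrt (a k)\<bar> * \<bar>vp - vq\<bar>"
    using n0 ak by (simp add: c_def abs_mult power2_eq_square algebra_simps)
  finally show ?thesis
    by (simp add: n_def dx_def up_def uq_def vp_def vq_def du_def dv_def)
qed

context
  fixes a :: "nat \<Rightarrow> real"
  assumes a_pos: "\<And>k. a k > 0"
    and a_sum: "summable (\<lambda>k. (1 + (real (Suc k))\<^sup>2) ^ 5 * (a k)\<^sup>2)"
begin

lemma bterm_abs_bound: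
  "\<bar>bterm a p k\<bar> \<le> \<bar>real (Suc k) * sqrt (a k)\<bar> * \<bar>fst (snd p) k\<bar> + \<bar>real (Suc k) * sqrt (a k)\<bar> * \<bar>snd (snd p) k\<bar>"
proof -
  define c where "c = real (Suc k) * sqrt (a k)"
  have c0: "c \<ge> 0" using a_pos[of k] by (simp add: c_def less_imp_le)
  define s where "s = sin (real (Suc k) * fst p)"
  define t where "t = cos (real (Suc k) * fst p)"
  have "\<bar>s * fst (snd p) k + t * snd (snd p) k\<bar> \<le> \<bar>s\<bar> * \<bar>fst (snd p) k\<bar> + \<bar>t\<bar> * \<bar>snd (snd p) k\<bar>"
    by (metis abs_mult abs_triangle_ineq)
  also have "\<dots> \<le> 1 * \<bar>fst (snd p) k\<bar> + 1 * \<bar>snd (snd p) k\<bar>"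
    by (intro add_mono mult_right_mono) (auto simp: s_def t_def)
  finally have h: "\<bar>s * fst (snd p) k + t * snd (snd p) k\<bar> \<le> \<bar>fst (snd p) k\<bar> + \<bar>snd (snd p) k\<bar>" by simp
  have "\<bar>bterm a p k\<bar> = c * \<bar>s * fst (snd p) k + t * snd (snd p) k\<bar>"
    using c0 a_pos[of k] by (simp add: bterm_def c_def s_def t_def abs_mult less_imp_le)
  also have "\<dots> \<le> c * (\<bar>fst (snd p) k\<bar> + \<bar>snd (snd p) k\<bar>)" by (rule mult_left_mono[OF h c0])
  finally have "\<bar>bterm a p k\<bar> \<le> c * \<bar>fst (snd p) k\<bar> + c * \<bar>snd (snd p) k\<bar>" by (simp only: distrib_left)
  moreover have "\<bar>real (Suc k) * sqrt (a k)\<bar> = c" using c0 by (simp only: c_def abs_of_nonneg)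
  ultimately show ?thesis by (simp only:)
qed

lemma bterm_summable:
  assumes "inH p" shows "summable (bterm a p)"
proof -
  have u: "in_l2 (fst (snd p))" and v: "in_l2 (snd (snd p))" using assms by (auto simp: inH_def)
  show ?thesis
    by (rule summable_le[OF summable_add[OF CS(1)[OF l2_a2(1)[OF a_pos a_sum] u] CS(1)[OF l2_a2(1)[OF a_pos a_sum] v]]])
       (simp only: real_norm_def bterm_abs_bound)
qed

lemma b_lip:
  assumes p: "inH p" and q: "inH q"
  shows "\<bar>fst (driftF a p) - fst (driftF a q)\<bar>
     \<le> (S4 a * (nrm (fst (snd p)) + nrm (snd (snd p))) + 2 * S2 a) * distH p q"
proof -
  have u: "in_l2 (fst (snd p))" and v: "in_l2 (snd (snd p))" using p by (auto simp: inH_def)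
  note c2 = l2_a2[OF a_pos a_sum] and c4 = l2_a4[OF a_pos a_sum]
  note ud = in_l2_du[OF p q] and vd = in_l2_dv[OF p q]
  define dx where "dx = \<bar>fst p - fst q\<bar>"
  define M where "M k = dx * (\<bar>(real (Suc k))^2 * sqrt (a k)\<bar> * \<bar>fst (snd p) k\<bar>
                         + \<bar>(real (Suc k))^2 * sqrt (a k)\<bar> * \<bar>snd (snd p) k\<bar>)
      + \<bar>real (Suc k) * sqrt (a k)\<bar> * \<bar>du p q k\<bar> + \<bar>real (Suc k) * sqrt (a k)\<bar> * \<bar>dv p q k\<bar>" for k
  have s1: "summable (\<lambda>k. \<bar>(real (Suc k))^2 * sqrt (a k)\<bar> * \<bar>fst (snd p) k\<bar>)" by (rule CS(1)[OF c4(1) u])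
  have s2: "summable (\<lambda>k. \<bar>(real (Suc k))^2 * sqrt (a k)\<bar> * \<bar>snd (snd p) k\<bar>)" by (rule CS(1)[OF c4(1) v])
  have s3: "summable (\<lambda>k. \<bar>real (Suc k) * sqrt (a k)\<bar> * \<bar>du p q k\<bar>)" by (rule CS(1)[OF c2(1) ud])
  have s4: "summable (\<lambda>k. \<bar>real (Suc k) * sqrt (a k)\<bar> * \<bar>dv p q k\<bar>)" by (rule CS(1)[OF c2(1) vd])
  have sM: "summable M" unfolding M_def
    by (intro summable_add summable_mult s1 s2 s3 s4)
  have sumM: "(\<Sum>k. M k) = dx * ((\<Sum>k. \<bar>(real (Suc k))^2 * sqrt (a k)\<bar> * \<bar>fst (snd p) k\<bar>)
          + (\<Sum>k. \<bar>(real (Suc k))^2 * sqrt (a k)\<bar> * \<bar>snd (snd p) k\<bar>))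
      + (\<Sum>k. \<bar>real (Suc k) * sqrt (a k)\<bar> * \<bar>du p q k\<bar>) + (\<Sum>k. \<bar>real (Suc k) * sqrt (a k)\<bar> * \<bar>dv p q k\<bar>)"
    unfolding M_def
    by (subst suminf_add[symmetric], (intro summable_add summable_mult s1 s2 s3 s4)+)+
       (simp only: suminf_mult[OF summable_add[OF s1 s2]] suminf_add[OF s1 s2])
  have dxb: "dx \<le> distH p q" "dx \<ge> 0" using distH_ge(1)[OF p q] by (auto simp: dx_def)
  have "(\<Sum>k. M k) \<le> dx * (S4 a * nrm (fst (snd p)) + S4 a * nrm (snd (snd p))) + S2 a * nrm (du p q) + S2 a * nrm (dv p q)"
    unfolding sumM
    using CS(2)[OF c4(1) u] CS(2)[OF c4(1) v] CS(2)[OF c2(1) ud] CS(2)[OF c2(1) vd] c2(2) c4(2) dxb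
    by (intro add_mono mult_left_mono) auto
  also have "\<dots> \<le> distH p q * (S4 a * nrm (fst (snd p)) + S4 a * nrm (snd (snd p))) + S2 a * distH p q + S2 a * distH p q"
    using dxb distH_ge(2,3)[OF p q] S2_nonneg[OF a_pos a_sum] S4_nonneg[OF a_pos a_sum] nrm_nonneg[OF u] nrm_nonneg[OF v]
    by (intro add_mono mult_right_mono mult_left_mono) auto
  finally have MB: "(\<Sum>k. M k) \<le> (S4 a * (nrm (fst (snd p)) + nrm (snd (snd p))) + 2 * S2 a) * distH p q"
    by (simp add: algebra_simps)
  have bd: "\<bar>bterm a p k - bterm a q k\<bar> \<le> M k" for k
    unfolding M_def dx_def by (rule bterm_diff_bound) (simp add: a_pos less_imp_le)
  have sd: "summable (\<lambda>k. bterm a p k - bterm a q k)"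
    by (rule summable_diff[OF bterm_summable[OF p] bterm_summable[OF q]])
  have e: "fst (driftF a p) - fst (driftF a q) = (\<Sum>k. bterm a p k - bterm a q k)"
    unfolding fst_driftF using suminf_diff[OF bterm_summable[OF p] bterm_summable[OF q]] by simp
  have "(\<Sum>k. bterm a p k - bterm a q k) \<le> (\<Sum>k. M k)"
    by (rule suminf_le[OF _ sd sM]) (use bd in \<open>simp add: abs_le_iff\<close>)
  moreover have "- (\<Sum>k. bterm a p k - bterm a q k) \<le> (\<Sum>k. M k)"
  proof -
    have "(\<Sum>k. - (bterm a p k - bterm a q k)) \<le> (\<Sum>k. M k)"
      by (rule suminf_le[OF _ summable_minus[OF sd] sM]) (use bd in \<open>simp add: abs_le_iff\<close>)
    moreover have "(\<Sum>k. - (bterm a p k - bterm a q k)) = - (\<Sum>k. bterm a p k - bterm a q k)"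
      by (rule suminf_minus[OF sd])
    ultimately show ?thesis by (simp only:)
  qed
  ultimately show ?thesis unfolding e using MB by linarith
qed

end


lemma path_cont_comp:
  assumes pc: "path_contH p"
    and L0: "\<And>t. t \<ge> 0 \<Longrightarrow> L t \<ge> 0"
    and lip: "\<And>t s. t \<ge> 0 \<Longrightarrow> s \<ge> 0 \<Longrightarrow> \<bar>f (p s) - f (p t)\<bar> \<le> L t * distH (p s) (p t)"
  shows "continuous_on {0..} (\<lambda>s. f (p s) :: real)"
  unfolding continuous_on_iff
proof (intro ballI allI impI)
  fix t e :: real assume t: "t \<in> {0..}" and e: "e > 0"
  define c where "c = L t + 1"
  have c: "c > 0" "L t < c" using L0[of t] t by (auto simp: c_def)
  have ec: "e / c > 0" using e c by simp
  have t0: "t \<ge> 0" using t by simp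
  obtain d where d: "d > 0" "\<And>s. s \<ge> 0 \<Longrightarrow> \<bar>s - t\<bar> < d \<Longrightarrow> distH (p s) (p t) < e / c"
    using pc[unfolded path_contH_def, rule_format, OF t0 ec] by blast
  show "\<exists>d>0. \<forall>s\<in>{0..}. dist s t < d \<longrightarrow> dist (f (p s)) (f (p t)) < e"
  proof (intro exI conjI ballI impI)
    fix s assume s: "s \<in> {0..}" and "dist s t < d"
    then have dd: "distH (p s) (p t) < e / c" using d(2)[of s] by (auto simp: dist_real_def)
    have "L t * distH (p s) (p t) \<le> L t * (e / c)"
      using dd L0[of t] t by (intro mult_left_mono) auto
    also have "\<dots> < e"
    proof -
      have "L t * (e / c) = e * (L t / c)" by simp
      also have "\<dots> < e * 1" using c e by (intro mult_strict_left_mono) auto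
      finally show ?thesis by simp
    qed
    finally show "dist (f (p s)) (f (p t)) < e"
      using lip[of t s] t s by (simp add: dist_real_def)
  next
    show "d > 0" by (rule d(1))
  qed
qed

lemma path_cont_fst:
  assumes pc: "path_contH p" and H: "\<And>s. s \<ge> 0 \<Longrightarrow> inH (p s)"
  shows "continuous_on {0..} (\<lambda>s. fst (p s))"
proof (rule path_cont_comp[OF pc, of "\<lambda>_. 1"])
  fix t s :: real assume "t \<ge> 0" "s \<ge> 0"
  then show "\<bar>fst (p s) - fst (p t)\<bar> \<le> 1 * distH (p s) (p t)" using distH_ge(1)[OF H H] by simp
qed simp

context
  fixes a :: "nat \<Rightarrow> real"
  assumes a_pos: "\<And>k. a k > 0"
    and a_sum: "summable (\<lambda>k. (1 + (real (Suc k))\<^sup>2) ^ 5 * (a k)\<^sup>2)"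
begin

lemma path_cont_b:
  assumes pc: "path_contH p" and H: "\<And>s. s \<ge> 0 \<Longrightarrow> inH (p s)"
  shows "continuous_on {0..} (\<lambda>s. fst (driftF a (p s)))"
proof (rule path_cont_comp[OF pc, of "\<lambda>t. S4 a * (nrm (fst (snd (p t))) + nrm (snd (snd (p t)))) + 2 * S2 a"])
  fix t :: real assume t: "t \<ge> 0"
  have u: "in_l2 (fst (snd (p t)))" and v: "in_l2 (snd (snd (p t)))" using H[OF t] by (auto simp: inH_def)
  show "0 \<le> S4 a * (nrm (fst (snd (p t))) + nrm (snd (snd (p t)))) + 2 * S2 a"
    using S4_nonneg[OF a_pos a_sum] S2_nonneg[OF a_pos a_sum] nrm_nonneg[OF u] nrm_nonneg[OF v] by simp
  fix s :: real assume s: "s \<ge> 0"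
  show "\<bar>fst (driftF a (p s)) - fst (driftF a (p t))\<bar>
      \<le> (S4 a * (nrm (fst (snd (p t))) + nrm (snd (snd (p t)))) + 2 * S2 a) * distH (p s) (p t)"
    using b_lip[OF a_pos a_sum H[OF t] H[OF s]] by (simp add: distH_sym abs_minus_commute)
qed

end


definition sol_path :: "(nat \<Rightarrow> real) \<Rightarrow> (real \<Rightarrow> real) \<Rightarrow> H \<Rightarrow> (real \<Rightarrow> H) \<Rightarrow> bool" where
  "sol_path a w z p \<longleftrightarrow> (\<forall>s\<ge>0. inH (p s)) \<and> path_contH p \<and>
     (\<forall>t\<ge>0.
           fst (p t) = fst z + integral {0..t} (\<lambda>s. fst (driftF a (p s))) + w t \<and>
           (\<forall>k. fst (snd (p t)) k
                  = fst (snd z) k + integral {0..t} (\<lambda>s. fst (snd (driftF a (p s))) k)) \<and>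
           (\<forall>k. snd (snd (p t)) k
                  = snd (snd z) k + integral {0..t} (\<lambda>s. snd (snd (driftF a (p s))) k)))"

lemma cont_sub: "continuous_on {0..} f \<Longrightarrow> continuous_on {0..r} f"
  by (rule continuous_on_subset) auto

lemma int_sub: "continuous_on {0..} f \<Longrightarrow> (f :: real \<Rightarrow> real) integrable_on {0..r}"
  by (rule integrable_continuous_interval[OF cont_sub])

lemma abs_int_le:
  fixes f g :: "real \<Rightarrow> real"
  assumes "continuous_on {0..} f" "continuous_on {0..} g" "\<And>s. s \<ge> 0 \<Longrightarrow> \<bar>f s\<bar> \<le> g s"
  shows "\<bar>integral {0..r} f\<bar> \<le> integral {0..r} g"
  using integral_norm_bound_integral[OF int_sub[OF assms(1)] int_sub[OF assms(2)], of r] assms(3)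
  by simp

lemma int_const_le:
  fixes f :: "real \<Rightarrow> real"
  assumes "continuous_on {0..} f" "\<And>s. 0 \<le> s \<Longrightarrow> s \<le> r \<Longrightarrow> f s \<le> c" "r \<ge> 0"
  shows "integral {0..r} f \<le> r * c"
proof -
  have "integral {0..r} f \<le> integral {0..r} (\<lambda>s. c)"
    by (rule integral_le[OF int_sub[OF assms(1)]]) (use assms(2) in auto)
  also have "\<dots> = r * c" using assms(3) by (simp add: content_real)
  finally show ?thesis .
qed

context
  fixes a :: "nat \<Rightarrow> real"
  assumes a_pos: "\<And>k. a k > 0"
    and a_sum: "summable (\<lambda>k. (1 + (real (Suc k))\<^sup>2) ^ 5 * (a k)\<^sup>2)"
begin

lemma apriori:
  assumes sp: "sol_path a w z p" and z: "inH z" and r: "r \<ge> 0"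
  shows "nrm (fst (snd (p r))) \<le> nrm (fst (snd z)) + r * sqrt (A0 a)"
        "nrm (snd (snd (p r))) \<le> nrm (snd (snd z)) + r * sqrt (A0 a)"
proof -
  have H: "\<And>s. s \<ge> 0 \<Longrightarrow> inH (p s)" and pc: "path_contH p" using sp by (auto simp: sol_path_def)
  have cx: "continuous_on {0..} (\<lambda>s. fst (p s))" by (rule path_cont_fst[OF pc H])
  have eq: "fst (snd (p r)) k = fst (snd z) k + integral {0..r} (\<lambda>s. fst (snd (driftF a (p s))) k)"
     "snd (snd (p r)) k = snd (snd z) k + integral {0..r} (\<lambda>s. snd (snd (driftF a (p s))) k)" for k
    using sp r unfolding sol_path_def by blast+
  have uz: "in_l2 (fst (snd z))" and vz: "in_l2 (snd (snd z))" using z by (auto simp: inH_def)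
  have l2r: "in_l2 (\<lambda>k. r * sqrt (a k))" by (rule in_l2_scale[OF l2_a0(1)[OF a_pos a_sum]])
  have nr: "nrm (\<lambda>k. r * sqrt (a k)) = r * sqrt (A0 a)"
    using nrm_scale[OF l2_a0(1)[OF a_pos a_sum]] l2_a0(2)[OF a_pos a_sum] r by simp
  have ib: "\<bar>integral {0..r} (\<lambda>s. g s)\<bar> \<le> \<bar>r * sqrt (a k)\<bar>"
    if g: "g = (\<lambda>s. sqrt (a k) * cos (real (Suc k) * fst (p s))) \<or> g = (\<lambda>s. - sqrt (a k) * sin (real (Suc k) * fst (p s)))" for g k
  proof -
    have cg: "continuous_on {0..} g" using g
      by (elim disjE) (simp_all, (intro continuous_intros cx)+)
    have "\<bar>integral {0..r} g\<bar> \<le> integral {0..r} (\<lambda>s. sqrt (a k))"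
    proof (rule abs_int_le[OF cg])
      show "continuous_on {0..} (\<lambda>s. sqrt (a k))" by (rule continuous_on_const)
      fix s :: real
      have sa: "sqrt (a k) \<ge> 0" using a_pos[of k] by simp
      have "\<bar>g s\<bar> = sqrt (a k) * \<bar>cos (real (Suc k) * fst (p s))\<bar> \<or> \<bar>g s\<bar> = sqrt (a k) * \<bar>sin (real (Suc k) * fst (p s))\<bar>"
        using g sa by (elim disjE) (simp_all add: abs_mult)
      then show "\<bar>g s\<bar> \<le> sqrt (a k)"
        using mult_left_le[OF abs_cos_le_one sa] mult_left_le[OF abs_sin_le_one sa] by auto
    qed
    also have "\<dots> = \<bar>r * sqrt (a k)\<bar>" using r a_pos[of k] by (simp add: content_real abs_mult less_imp_le)
    finally show ?thesis by simp
  qed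
  show "nrm (fst (snd (p r))) \<le> nrm (fst (snd z)) + r * sqrt (A0 a)"
  proof -
    have "\<bar>fst (snd (p r)) k\<bar> \<le> \<bar>fst (snd z) k\<bar> + \<bar>r * sqrt (a k)\<bar>" for k
      unfolding eq(1)[of k] using ib[of "\<lambda>s. sqrt (a k) * cos (real (Suc k) * fst (p s))" k]
      by (simp add: fst_snd_driftF)
    then show ?thesis using nrm_bound(2)[OF uz l2r] nr by simp
  qed
  show "nrm (snd (snd (p r))) \<le> nrm (snd (snd z)) + r * sqrt (A0 a)"
  proof -
    have "\<bar>snd (snd (p r)) k\<bar> \<le> \<bar>snd (snd z) k\<bar> + \<bar>r * sqrt (a k)\<bar>" for k
      unfolding eq(2)[of k] using ib[of "\<lambda>s. - sqrt (a k) * sin (real (Suc k) * fst (p s))" k]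
      by (simp add: snd_snd_driftF)
    then show ?thesis using nrm_bound(2)[OF vz l2r] nr by simp
  qed
qed

end


context
  fixes a :: "nat \<Rightarrow> real"
  assumes a_pos: "\<And>k. a k > 0"
    and a_sum: "summable (\<lambda>k. (1 + (real (Suc k))\<^sup>2) ^ 5 * (a k)\<^sup>2)"
begin

definition "Rb z T = nrm (fst (snd z)) + nrm (snd (snd z)) + 2 * T * sqrt (A0 a)"
definition "Kc z T = (S4 a * Rb z T + 2 * S2 a) * (3 + 2 * S2 a * T)"
definition "Cst z T = (3 + 2 * S2 a * T) * exp (Kc z T * T)"

lemma stab:
  assumes sp1: "sol_path a w z1 p1" and sp2: "sol_path a w z2 p2"
    and z1: "inH z1" and z2: "inH z2" and T: "T \<ge> 0"
  shows "distH (p1 T) (p2 T) \<le> Cst z1 T * distH z1 z2"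
proof -
  have H1: "\<And>s. s \<ge> 0 \<Longrightarrow> inH (p1 s)" and pc1: "path_contH p1" using sp1 by (auto simp: sol_path_def)
  have H2: "\<And>s. s \<ge> 0 \<Longrightarrow> inH (p2 s)" and pc2: "path_contH p2" using sp2 by (auto simp: sol_path_def)
  have E1: "\<And>t. t \<ge> 0 \<Longrightarrow> fst (p1 t) = fst z1 + integral {0..t} (\<lambda>s. fst (driftF a (p1 s))) + w t \<and>
           (\<forall>k. fst (snd (p1 t)) k = fst (snd z1) k + integral {0..t} (\<lambda>s. fst (snd (driftF a (p1 s))) k)) \<and>
           (\<forall>k. snd (snd (p1 t)) k = snd (snd z1) k + integral {0..t} (\<lambda>s. snd (snd (driftF a (p1 s))) k))"
    using sp1 unfolding sol_path_def by blast
  have E2: "\<And>t. t \<ge> 0 \<Longrightarrow> fst (p2 t) = fst z2 + integral {0..t} (\<lambda>s. fst (driftF a (p2 s))) + w t \<and>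
           (\<forall>k. fst (snd (p2 t)) k = fst (snd z2) k + integral {0..t} (\<lambda>s. fst (snd (driftF a (p2 s))) k)) \<and>
           (\<forall>k. snd (snd (p2 t)) k = snd (snd z2) k + integral {0..t} (\<lambda>s. snd (snd (driftF a (p2 s))) k))"
    using sp2 unfolding sol_path_def by blast
  have cx1: "continuous_on {0..} (\<lambda>s. fst (p1 s))" by (rule path_cont_fst[OF pc1 H1])
  have cx2: "continuous_on {0..} (\<lambda>s. fst (p2 s))" by (rule path_cont_fst[OF pc2 H2])
  have cb1: "continuous_on {0..} (\<lambda>s. fst (driftF a (p1 s)))" by (rule path_cont_b[OF a_pos a_sum pc1 H1])
  have cb2: "continuous_on {0..} (\<lambda>s. fst (driftF a (p2 s)))" by (rule path_cont_b[OF a_pos a_sum pc2 H2])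
  define db where "db s = fst (driftF a (p1 s)) - fst (driftF a (p2 s))" for s
  define ex where "ex s = fst (p1 s) - fst (p2 s)" for s
  have cdb: "continuous_on {0..} db" unfolding db_def by (intro continuous_intros cb1 cb2)
  have cadb: "continuous_on {0..} (\<lambda>s. \<bar>db s\<bar>)" by (intro continuous_intros cdb)
  have cex: "continuous_on {0..} ex" unfolding ex_def by (intro continuous_intros cx1 cx2)
  have caex: "continuous_on {0..} (\<lambda>s. \<bar>ex s\<bar>)" by (intro continuous_intros cex)
  define h where "h r = integral {0..r} (\<lambda>s. \<bar>db s\<bar>)" for r
  define d0 where "d0 = distH z1 z2"
  have d0x: "\<bar>fst z1 - fst z2\<bar> \<le> d0" and d0u: "nrm (du z1 z2) \<le> d0" and d0v: "nrm (dv z1 z2) \<le> d0"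
    and d00: "d0 \<ge> 0"
    using distH_ge[OF z1 z2] by (auto simp: d0_def)
  have S20: "S2 a \<ge> 0" by (rule S2_nonneg[OF a_pos a_sum])
  have S40: "S4 a \<ge> 0" by (rule S4_nonneg[OF a_pos a_sum])
  have A00: "A0 a \<ge> 0" by (rule A0_nonneg[OF a_pos a_sum])
  have h0: "h r \<ge> 0" if "r \<ge> 0" for r
    unfolding h_def by (rule integral_nonneg[OF int_sub[OF cadb]]) simp
  have hmono: "h r \<le> h r'" if "0 \<le> r" "r \<le> r'" for r r'
    unfolding h_def
    by (rule integral_subset_le) (use that int_sub[OF cadb] in auto)
  have ex_eq: "ex r = (fst z1 - fst z2) + integral {0..r} db" if r: "r \<ge> 0" for r
  proof -
    have "integral {0..r} db = integral {0..r} (\<lambda>s. fst (driftF a (p1 s))) - integral {0..r} (\<lambda>s. fst (driftF a (p2 s)))"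
      unfolding db_def by (rule integral_diff[OF int_sub[OF cb1] int_sub[OF cb2]])
    then show ?thesis using E1[OF r] E2[OF r] by (simp add: ex_def)
  qed
  have ex_bd: "\<bar>ex r\<bar> \<le> d0 + h r" if r: "r \<ge> 0" for r
  proof -
    have "\<bar>integral {0..r} db\<bar> \<le> h r"
      unfolding h_def by (rule abs_int_le[OF cdb cadb]) simp
    then show ?thesis using ex_eq[OF r] d0x by linarith
  qed
  have Iex: "integral {0..r} (\<lambda>s. \<bar>ex s\<bar>) \<le> r * (d0 + h r)" if r: "r \<ge> 0" for r
  proof (rule int_const_le[OF caex _ r])
    fix s assume "0 \<le> s" "s \<le> r"
    then show "\<bar>ex s\<bar> \<le> d0 + h r" using ex_bd[of s] hmono[of s r] by simp
  qed
  have Iex0: "integral {0..r} (\<lambda>s. \<bar>ex s\<bar>) \<ge> 0" for r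
    by (rule integral_nonneg[OF int_sub[OF caex]]) simp
  note c2 = l2_a2[OF a_pos a_sum]
  have comp_bd: "\<bar>integral {0..r} (\<lambda>s. sqrt (a k) * g (real (Suc k) * fst (p1 s)) - sqrt (a k) * g (real (Suc k) * fst (p2 s)))\<bar>
      \<le> \<bar>real (Suc k) * sqrt (a k)\<bar> * integral {0..r} (\<lambda>s. \<bar>ex s\<bar>)"
    if g: "g = sin \<or> g = cos" and r: "r \<ge> 0" for g k r
  proof -
    have sa: "sqrt (a k) \<ge> 0" using a_pos[of k] by simp
    have cg: "continuous_on {0..} (\<lambda>s. sqrt (a k) * g (real (Suc k) * fst (p1 s)) - sqrt (a k) * g (real (Suc k) * fst (p2 s)))"
      using g by (elim disjE) (simp_all, (intro continuous_intros cx1 cx2)+)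
    have "\<bar>integral {0..r} (\<lambda>s. sqrt (a k) * g (real (Suc k) * fst (p1 s)) - sqrt (a k) * g (real (Suc k) * fst (p2 s)))\<bar>
        \<le> integral {0..r} (\<lambda>s. \<bar>real (Suc k) * sqrt (a k)\<bar> * \<bar>ex s\<bar>)"
    proof (rule abs_int_le[OF cg])
      show "continuous_on {0..} (\<lambda>s. \<bar>real (Suc k) * sqrt (a k)\<bar> * \<bar>ex s\<bar>)" by (intro continuous_intros caex)
      fix s :: real
      have gl: "\<bar>g x - g y\<bar> \<le> \<bar>x - y\<bar>" for x y using g abs_sin_diff abs_cos_diff by blast
      have "\<bar>sqrt (a k) * g (real (Suc k) * fst (p1 s)) - sqrt (a k) * g (real (Suc k) * fst (p2 s))\<bar>
          = sqrt (a k) * \<bar>g (real (Suc k) * fst (p1 s)) - g (real (Suc k) * fst (p2 s))\<bar>"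
        using sa by (simp add: abs_mult flip: right_diff_distrib)
      also have "\<dots> \<le> sqrt (a k) * \<bar>real (Suc k) * fst (p1 s) - real (Suc k) * fst (p2 s)\<bar>"
        by (rule mult_left_mono[OF gl sa])
      also have "\<dots> = \<bar>real (Suc k) * sqrt (a k)\<bar> * \<bar>ex s\<bar>"
        using sa by (simp add: ex_def abs_mult flip: right_diff_distrib)
      finally show "\<bar>sqrt (a k) * g (real (Suc k) * fst (p1 s)) - sqrt (a k) * g (real (Suc k) * fst (p2 s))\<bar>
          \<le> \<bar>real (Suc k) * sqrt (a k)\<bar> * \<bar>ex s\<bar>" .
    qed
    also have "\<dots> = \<bar>real (Suc k) * sqrt (a k)\<bar> * integral {0..r} (\<lambda>s. \<bar>ex s\<bar>)"
      by (simp add: integral_mult_right)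
    finally show ?thesis .
  qed
  have nrm_eu: "nrm (du (p1 r) (p2 r)) \<le> d0 + S2 a * integral {0..r} (\<lambda>s. \<bar>ex s\<bar>)"
   and nrm_ev: "nrm (dv (p1 r) (p2 r)) \<le> d0 + S2 a * integral {0..r} (\<lambda>s. \<bar>ex s\<bar>)"
    if r: "r \<ge> 0" for r
  proof -
    define I where "I = integral {0..r} (\<lambda>s. \<bar>ex s\<bar>)"
    have I0: "I \<ge> 0" using Iex0 by (simp add: I_def)
    have l2I: "in_l2 (\<lambda>k. I * (real (Suc k) * sqrt (a k)))" by (rule in_l2_scale[OF c2(1)])
    have nI: "nrm (\<lambda>k. I * (real (Suc k) * sqrt (a k))) = S2 a * I"
      using nrm_scale[OF c2(1), of I] c2(2) I0 by simp
    have absI: "\<bar>I * (real (Suc k) * sqrt (a k))\<bar> = \<bar>real (Suc k) * sqrt (a k)\<bar> * I" for k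
      using I0 by (simp add: abs_mult)
    have "\<bar>du (p1 r) (p2 r) k\<bar> \<le> \<bar>du z1 z2 k\<bar> + \<bar>I * (real (Suc k) * sqrt (a k))\<bar>" for k
    proof -
      have "du (p1 r) (p2 r) k = du z1 z2 k + integral {0..r} (\<lambda>s. sqrt (a k) * cos (real (Suc k) * fst (p1 s)) - sqrt (a k) * cos (real (Suc k) * fst (p2 s)))"
      proof -
        have i1: "(\<lambda>s. sqrt (a k) * cos (real (Suc k) * fst (p1 s))) integrable_on {0..r}"
          by (rule int_sub) (intro continuous_intros cx1)
        have i2: "(\<lambda>s. sqrt (a k) * cos (real (Suc k) * fst (p2 s))) integrable_on {0..r}"
          by (rule int_sub) (intro continuous_intros cx2)
        show ?thesis using E1[OF r] E2[OF r] integral_diff[OF i1 i2]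
          by (simp add: du_def fst_snd_driftF)
      qed
      then show ?thesis using comp_bd[of cos r k] r absI[of k] by (simp add: I_def)
    qed
    then have "nrm (du (p1 r) (p2 r)) \<le> nrm (du z1 z2) + S2 a * I"
      using nrm_bound(2)[OF in_l2_du[OF z1 z2] l2I] nI by simp
    then show "nrm (du (p1 r) (p2 r)) \<le> d0 + S2 a * integral {0..r} (\<lambda>s. \<bar>ex s\<bar>)"
      using d0u by (simp add: I_def)
    have "\<bar>dv (p1 r) (p2 r) k\<bar> \<le> \<bar>dv z1 z2 k\<bar> + \<bar>I * (real (Suc k) * sqrt (a k))\<bar>" for k
    proof -
      have "dv (p1 r) (p2 r) k = dv z1 z2 k - integral {0..r} (\<lambda>s. sqrt (a k) * sin (real (Suc k) * fst (p1 s)) - sqrt (a k) * sin (real (Suc k) * fst (p2 s)))"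
      proof -
        have i1: "(\<lambda>s. sqrt (a k) * sin (real (Suc k) * fst (p1 s))) integrable_on {0..r}"
          by (rule int_sub) (intro continuous_intros cx1)
        have i2: "(\<lambda>s. sqrt (a k) * sin (real (Suc k) * fst (p2 s))) integrable_on {0..r}"
          by (rule int_sub) (intro continuous_intros cx2)
        have m1: "integral {0..r} (\<lambda>s. - sqrt (a k) * sin (real (Suc k) * fst (p1 s))) = - integral {0..r} (\<lambda>s. sqrt (a k) * sin (real (Suc k) * fst (p1 s)))"
          using integral_neg[of "{0..r}" "\<lambda>s. sqrt (a k) * sin (real (Suc k) * fst (p1 s))"] by simp
        have m2: "integral {0..r} (\<lambda>s. - sqrt (a k) * sin (real (Suc k) * fst (p2 s))) = - integral {0..r} (\<lambda>s. sqrt (a k) * sin (real (Suc k) * fst (p2 s)))"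
          using integral_neg[of "{0..r}" "\<lambda>s. sqrt (a k) * sin (real (Suc k) * fst (p2 s))"] by simp
        show ?thesis using E1[OF r] E2[OF r] integral_diff[OF i1 i2] m1 m2
          by (simp add: dv_def snd_snd_driftF)
      qed
      then show ?thesis using comp_bd[of sin r k] r absI[of k] by (simp add: I_def)
    qed
    then have "nrm (dv (p1 r) (p2 r)) \<le> nrm (dv z1 z2) + S2 a * I"
      using nrm_bound(2)[OF in_l2_dv[OF z1 z2] l2I] nI by simp
    then show "nrm (dv (p1 r) (p2 r)) \<le> d0 + S2 a * integral {0..r} (\<lambda>s. \<bar>ex s\<bar>)"
      using d0v by (simp add: I_def)
  qed
  define K where "K = Kc z1 T"
  define L where "L = S4 a * Rb z1 T + 2 * S2 a"
  have L0: "L \<ge> 0" unfolding L_def Rb_def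
    using S40 S20 A00 T nrm_nonneg[of "fst (snd z1)"] nrm_nonneg[of "snd (snd z1)"] z1
    by (simp add: inH_def)
  have Kdef: "K = L * (3 + 2 * S2 a * T)" by (simp add: K_def L_def Kc_def)
  have dist_bd: "distH (p1 r) (p2 r) \<le> (3 + 2 * S2 a * T) * (d0 + h r)" if r: "0 \<le> r" "r \<le> T" for r
  proof -
    have dh: "d0 + h r \<ge> 0" using d00 h0[OF r(1)] by simp
    have I: "integral {0..r} (\<lambda>s. \<bar>ex s\<bar>) \<le> T * (d0 + h r)"
      using Iex[OF r(1)] mult_right_mono[OF r(2) dh] by simp
    have SI: "S2 a * integral {0..r} (\<lambda>s. \<bar>ex s\<bar>) \<le> S2 a * (T * (d0 + h r))"
      by (rule mult_left_mono[OF I S20])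
    have "distH (p1 r) (p2 r) \<le> \<bar>ex r\<bar> + nrm (du (p1 r) (p2 r)) + nrm (dv (p1 r) (p2 r))"
      using distH_ge(4)[OF H1[OF r(1)] H2[OF r(1)]] by (simp add: ex_def)
    also have "\<dots> \<le> (d0 + h r) + (d0 + S2 a * (T * (d0 + h r))) + (d0 + S2 a * (T * (d0 + h r)))"
      using ex_bd[OF r(1)] nrm_eu[OF r(1)] nrm_ev[OF r(1)] SI by linarith
    also have "\<dots> \<le> (3 + 2 * S2 a * T) * (d0 + h r)"
      using d00 h0[OF r(1)] by (simp add: algebra_simps)
    finally show ?thesis .
  qed
  have db_bd: "\<bar>db r\<bar> \<le> K * (d0 + h r)" if r: "0 \<le> r" "r \<le> T" for r
  proof -
    have u: "in_l2 (fst (snd (p1 r)))" and v: "in_l2 (snd (snd (p1 r)))" using H1[OF r(1)] by (auto simp: inH_def)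
    have ap: "nrm (fst (snd (p1 r))) + nrm (snd (snd (p1 r))) \<le> Rb z1 T"
    proof -
      have "r * sqrt (A0 a) \<le> T * sqrt (A0 a)" using r A00 by (intro mult_right_mono) auto
      then show ?thesis using apriori[OF a_pos a_sum sp1 z1 r(1)] by (simp add: Rb_def)
    qed
    have coef: "S4 a * (nrm (fst (snd (p1 r))) + nrm (snd (snd (p1 r)))) + 2 * S2 a \<le> L"
      unfolding L_def using mult_left_mono[OF ap S40] by simp
    have dH0: "distH (p1 r) (p2 r) \<ge> 0" by (rule distH_ge(5)[OF H1[OF r(1)] H2[OF r(1)]])
    have "\<bar>db r\<bar> \<le> (S4 a * (nrm (fst (snd (p1 r))) + nrm (snd (snd (p1 r)))) + 2 * S2 a) * distH (p1 r) (p2 r)"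
      unfolding db_def by (rule b_lip[OF a_pos a_sum H1[OF r(1)] H2[OF r(1)]])
    also have "\<dots> \<le> L * distH (p1 r) (p2 r)" by (rule mult_right_mono[OF coef dH0])
    also have "\<dots> \<le> L * ((3 + 2 * S2 a * T) * (d0 + h r))" by (rule mult_left_mono[OF dist_bd[OF r] L0])
    finally show ?thesis by (simp add: Kdef)
  qed
  have cT: "continuous_on {0..T} (\<lambda>s. \<bar>db s\<bar>)" by (rule cont_sub[OF cadb])
  have hder: "(h has_real_derivative \<bar>db r\<bar>) (at r within {0..T})" if "r \<in> {0..T}" for r
    unfolding h_def[abs_def] by (rule integral_has_real_derivative[OF cT that])
  have hcont: "continuous_on {0..T} h" by (rule DERIV_continuous_on[OF hder])
  define phi where "phi r = (d0 + h r) * exp ((- K) * r)" for r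
  have phicont: "continuous_on {0..T} phi" unfolding phi_def by (intro continuous_intros hcont)
  have phider: "\<exists>y. DERIV phi r :> y \<and> y \<le> 0" if r: "0 < r" "r < T" for r
  proof -
    have hd: "(h has_real_derivative \<bar>db r\<bar>) (at r)"
      using hder[of r] r at_within_interior[of r "{0..T}"] by simp
    have d1: "((\<lambda>r. d0 + h r) has_real_derivative 0 + \<bar>db r\<bar>) (at r)"
      by (rule Deriv.field_differentiable_add[OF DERIV_const hd])
    have d2: "((\<lambda>x. exp ((- K) * x)) has_real_derivative exp ((- K) * r) * (- K)) (at r)"
      by (rule DERIV_fun_exp[OF DERIV_cmult_Id])
    have "DERIV phi r :> (0 + \<bar>db r\<bar>) * exp ((- K) * r) + exp ((- K) * r) * (- K) * (d0 + h r)"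
      unfolding phi_def[abs_def] by (rule DERIV_mult[OF d1 d2])
    moreover have "(0 + \<bar>db r\<bar>) * exp ((- K) * r) + exp ((- K) * r) * (- K) * (d0 + h r) \<le> 0"
    proof -
      have "(0 + \<bar>db r\<bar>) * exp ((- K) * r) + exp ((- K) * r) * (- K) * (d0 + h r)
          = exp ((- K) * r) * (\<bar>db r\<bar> - K * (d0 + h r))" by (simp add: algebra_simps)
      also have "\<dots> \<le> 0" using db_bd[of r] r by (intro mult_nonneg_nonpos) auto
      finally show ?thesis .
    qed
    ultimately show ?thesis by blast
  qed
  have "phi T \<le> phi 0" by (rule DERIV_nonpos_imp_decreasing_open[OF T phider phicont])
  moreover have "phi 0 = d0" by (simp add: phi_def h_def)
  ultimately have p1: "(d0 + h T) * exp ((- K) * T) \<le> d0" by (simp add: phi_def)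
  have p2: "(d0 + h T) * exp ((- K) * T) * exp (K * T) \<le> d0 * exp (K * T)"
    by (rule mult_right_mono[OF p1]) simp
  have p3: "(d0 + h T) * exp ((- K) * T) * exp (K * T) = d0 + h T"
    by (simp add: mult.assoc flip: exp_add)
  have gr: "d0 + h T \<le> d0 * exp (K * T)" using p2 unfolding p3 .
  have c0: "3 + 2 * S2 a * T \<ge> 0" using S20 T by simp
  have "distH (p1 T) (p2 T) \<le> (3 + 2 * S2 a * T) * (d0 + h T)" using dist_bd[of T] T by simp
  also have "\<dots> \<le> (3 + 2 * S2 a * T) * (d0 * exp (K * T))" by (rule mult_left_mono[OF gr c0])
  finally show ?thesis by (simp add: Cst_def K_def d0_def mult.commute mult.left_commute)
qed

end


lemma contH_seq:
  assumes c: "contH \<phi>" and p: "inH p" and x: "\<And>n. inH (x n)" and l: "(\<lambda>n. distH (x n) p) \<longlonglongrightarrow> 0"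
  shows "(\<lambda>n. \<phi> (x n)) \<longlonglongrightarrow> \<phi> p"
proof (rule LIMSEQ_I)
  fix r :: real assume r: "r > 0"
  obtain d where d: "d > 0" "\<And>y'. inH y' \<Longrightarrow> distH y' p < d \<Longrightarrow> \<bar>\<phi> y' - \<phi> p\<bar> < r"
    using c[unfolded contH_def, rule_format, OF p r] by blast
  obtain no where no: "\<And>n. n \<ge> no \<Longrightarrow> norm (distH (x n) p - 0) < d"
    using LIMSEQ_D[OF l d(1)] by blast
  show "\<exists>no. \<forall>n\<ge>no. norm (\<phi> (x n) - \<phi> p) < r"
  proof (intro exI allI impI)
    fix n assume "n \<ge> no"
    then have "distH (x n) p < d" using no[of n] by simp
    then show "norm (\<phi> (x n) - \<phi> p) < r" using d(2)[OF x] by simp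
  qed
qed

definition trunc :: "nat \<Rightarrow> H \<Rightarrow> H" where
  "trunc N p = (fst p, (\<lambda>k. if k < N then fst (snd p) k else 0), (\<lambda>k. if k < N then snd (snd p) k else 0))"

lemma suminf_trunc: "(\<Sum>k. (if k < N then f k else (0::real))) = (\<Sum>k<N. f k)"
  by (subst suminf_finite[of "{..<N}"]) auto

lemma in_l2_trunc: "in_l2 (\<lambda>k. if k < N then f k else 0)"
  unfolding in_l2_def
proof -
  have "(\<lambda>k. (if k < N then f k else (0::real))\<^sup>2) = (\<lambda>k. if k < N then (f k)\<^sup>2 else 0)" by auto
  moreover have "summable (\<lambda>k. if k < N then (f k)\<^sup>2 else (0::real))"
    by (rule summable_finite[of "{..<N}"]) auto
  ultimately show "summable (\<lambda>k. (if k < N then f k else 0)\<^sup>2)" by simp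
qed

lemma trunc_inH: "inH (trunc N p)"
  unfolding inH_def trunc_def using in_l2_trunc by simp

lemma trunc_dist: "distH (trunc N p) (trunc N q) =
   sqrt ((fst p - fst q)\<^sup>2 + (\<Sum>k<N. (fst (snd p) k - fst (snd q) k)\<^sup>2) + (\<Sum>k<N. (snd (snd p) k - snd (snd q) k)\<^sup>2))"
proof -
  have e1: "(\<lambda>k. ((if k < N then fst (snd p) k else 0) - (if k < N then fst (snd q) k else 0))\<^sup>2)
      = (\<lambda>k. if k < N then (fst (snd p) k - fst (snd q) k)\<^sup>2 else 0)" by auto
  have e2: "(\<lambda>k. ((if k < N then snd (snd p) k else 0) - (if k < N then snd (snd q) k else 0))\<^sup>2)
      = (\<lambda>k. if k < N then (snd (snd p) k - snd (snd q) k)\<^sup>2 else 0)" by auto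
  show ?thesis unfolding distH_def trunc_def by (simp add: e1 e2 suminf_trunc)
qed

lemma tail_tendsto:
  assumes s: "summable (f :: nat \<Rightarrow> real)"
  shows "(\<lambda>N. \<Sum>k. (if k < N then 0 else f k)) \<longlonglongrightarrow> 0"
proof -
  have eq: "(\<Sum>k. (if k < N then 0 else f k)) = suminf f - (\<Sum>k<N. f k)" for N
  proof -
    have e: "(\<lambda>k. if k < N then 0 else f k) = (\<lambda>k. f k - (if k < N then f k else 0))" by auto
    have sg: "summable (\<lambda>k. if k < N then f k else (0::real))"
      by (rule summable_finite[of "{..<N}"]) auto
    show ?thesis unfolding e using suminf_diff[OF s sg] suminf_trunc[of N f] by simp
  qed
  have "(\<lambda>N. suminf f - (\<Sum>k<N. f k)) \<longlonglongrightarrow> suminf f - suminf f"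
    by (intro tendsto_diff tendsto_const summable_LIMSEQ[OF s])
  then show ?thesis unfolding eq by simp
qed

lemma trunc_conv:
  assumes p: "inH p" shows "(\<lambda>N. distH (trunc N p) p) \<longlonglongrightarrow> 0"
proof -
  have u: "summable (\<lambda>k. (fst (snd p) k)\<^sup>2)" and v: "summable (\<lambda>k. (snd (snd p) k)\<^sup>2)"
    using p by (auto simp: inH_def in_l2_def)
  have e1: "(\<lambda>k. ((if k < N then fst (snd p) k else 0) - fst (snd p) k)\<^sup>2) = (\<lambda>k. if k < N then 0 else (fst (snd p) k)\<^sup>2)" for N
    by auto
  have e2: "(\<lambda>k. ((if k < N then snd (snd p) k else 0) - snd (snd p) k)\<^sup>2) = (\<lambda>k. if k < N then 0 else (snd (snd p) k)\<^sup>2)" for N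
    by auto
  have d: "distH (trunc N p) p = sqrt ((\<Sum>k. if k < N then 0 else (fst (snd p) k)\<^sup>2) + (\<Sum>k. if k < N then 0 else (snd (snd p) k)\<^sup>2))" for N
    unfolding distH_def trunc_def by (simp add: e1 e2)
  have "(\<lambda>N. sqrt ((\<Sum>k. if k < N then 0 else (fst (snd p) k)\<^sup>2) + (\<Sum>k. if k < N then 0 else (snd (snd p) k)\<^sup>2))) \<longlonglongrightarrow> sqrt (0 + 0)"
    by (intro tendsto_real_sqrt tendsto_add tail_tendsto u v)
  then show ?thesis unfolding d by simp
qed

lemma coord_cont:
  "continuous_on S (\<lambda>p::H. fst (snd p) k)" "continuous_on S (\<lambda>p::H. snd (snd p) k)"
  by (rule continuous_on_compose2[OF continuous_on_product_coordinates], (intro continuous_intros), simp)+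

lemma G_cont:
  assumes c: "contH \<phi>"
  shows "continuous_on UNIV (\<lambda>p::H. \<phi> (trunc N p))"
  unfolding continuous_on_sequentially
proof (intro allI ballI impI)
  fix x :: "nat \<Rightarrow> H" and a :: H
  assume "(\<forall>n. x n \<in> UNIV) \<and> x \<longlonglongrightarrow> a"
  then have xa: "x \<longlonglongrightarrow> a" by simp
  define Fd where "Fd p = sqrt ((fst p - fst a)\<^sup>2 + (\<Sum>k<N. (fst (snd p) k - fst (snd a) k)\<^sup>2) + (\<Sum>k<N. (snd (snd p) k - snd (snd a) k)\<^sup>2))" for p :: H
  have Fc: "continuous_on UNIV Fd" unfolding Fd_def
    by (intro continuous_intros coord_cont)
  have "(\<lambda>n. Fd (x n)) \<longlonglongrightarrow> Fd a"
    by (rule continuous_on_tendsto_compose[OF Fc xa]) auto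
  moreover have "Fd a = 0" by (simp add: Fd_def)
  ultimately have "(\<lambda>n. distH (trunc N (x n)) (trunc N a)) \<longlonglongrightarrow> 0"
    by (simp add: trunc_dist Fd_def)
  then show "((\<lambda>p. \<phi> (trunc N p)) \<circ> x) \<longlonglongrightarrow> \<phi> (trunc N a)"
    using contH_seq[OF c trunc_inH trunc_inH] by (simp add: comp_def)
qed

lemma meas_H:
  fixes f :: "'w \<Rightarrow> H"
  assumes "(\<lambda>\<omega>. fst (f \<omega>)) \<in> borel_measurable M"
    "\<And>k. (\<lambda>\<omega>. fst (snd (f \<omega>)) k) \<in> borel_measurable M"
    "\<And>k. (\<lambda>\<omega>. snd (snd (f \<omega>)) k) \<in> borel_measurable M"
  shows "f \<in> borel_measurable M"
proof -
  have u: "(\<lambda>\<omega>. fst (snd (f \<omega>))) \<in> borel_measurable M"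
    by (rule measurable_coordinatewise_then_product) (rule assms(2))
  have v: "(\<lambda>\<omega>. snd (snd (f \<omega>))) \<in> borel_measurable M"
    by (rule measurable_coordinatewise_then_product) (rule assms(3))
  have "(\<lambda>\<omega>. (fst (f \<omega>), (fst (snd (f \<omega>)), snd (snd (f \<omega>))))) \<in> borel_measurable M"
    by (intro borel_measurable_Pair assms(1) u v)
  then show ?thesis by simp
qed

lemma meas_phi:
  fixes f :: "'w \<Rightarrow> H"
  assumes c: "contH \<phi>" and f: "f \<in> borel_measurable M" and H: "\<And>\<omega>. \<omega> \<in> space M \<Longrightarrow> inH (f \<omega>)"
  shows "(\<lambda>\<omega>. \<phi> (f \<omega>)) \<in> borel_measurable M"
proof (rule borel_measurable_LIMSEQ_real[where u="\<lambda>N \<omega>. \<phi> (trunc N (f \<omega>))"])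
  fix \<omega> assume "\<omega> \<in> space M"
  then show "(\<lambda>N. \<phi> (trunc N (f \<omega>))) \<longlonglongrightarrow> \<phi> (f \<omega>)"
    using contH_seq[OF c H trunc_inH trunc_conv[OF H]] by simp
next
  fix N
  show "(\<lambda>\<omega>. \<phi> (trunc N (f \<omega>))) \<in> borel_measurable M"
    using measurable_compose[OF f borel_measurable_continuous_onI[OF G_cont[OF c]]] by simp
qed


lemma sol_AE:
  assumes "strong_solution M \<beta> a z Y'"
  shows "AE \<omega> in M. sol_path a (\<lambda>t. \<beta> t \<omega>) z (\<lambda>t. Y' t \<omega>)"
proof -
  have H: "\<And>t \<omega>. t \<ge> 0 \<Longrightarrow> \<omega> \<in> space M \<Longrightarrow> inH (Y' t \<omega>)" using assms by (simp add: strong_solution_def)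
  have A: "AE \<omega> in M.
        path_contH (\<lambda>t. Y' t \<omega>) \<and>
        (\<forall>t\<ge>0.
           fst (Y' t \<omega>) = fst z + integral {0..t} (\<lambda>s. fst (driftF a (Y' s \<omega>))) + \<beta> t \<omega> \<and>
           (\<forall>k. fst (snd (Y' t \<omega>)) k
                  = fst (snd z) k + integral {0..t} (\<lambda>s. fst (snd (driftF a (Y' s \<omega>))) k)) \<and>
           (\<forall>k. snd (snd (Y' t \<omega>)) k
                  = snd (snd z) k + integral {0..t} (\<lambda>s. snd (snd (driftF a (Y' s \<omega>))) k)))"
    using assms by (simp add: strong_solution_def)
  show ?thesis
  proof (rule AE_mp[OF A AE_I2], intro impI)
    fix \<omega> assume "\<omega> \<in> space M" and Q: "path_contH (\<lambda>t. Y' t \<omega>) \<and>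
        (\<forall>t\<ge>0.
           fst (Y' t \<omega>) = fst z + integral {0..t} (\<lambda>s. fst (driftF a (Y' s \<omega>))) + \<beta> t \<omega> \<and>
           (\<forall>k. fst (snd (Y' t \<omega>)) k
                  = fst (snd z) k + integral {0..t} (\<lambda>s. fst (snd (driftF a (Y' s \<omega>))) k)) \<and>
           (\<forall>k. snd (snd (Y' t \<omega>)) k
                  = snd (snd z) k + integral {0..t} (\<lambda>s. snd (snd (driftF a (Y' s \<omega>))) k)))"
    then show "sol_path a (\<lambda>t. \<beta> t \<omega>) z (\<lambda>t. Y' t \<omega>)"
      unfolding sol_path_def using H by blast
  qed
qed

lemma conv_AE:
  fixes Y :: "H \<Rightarrow> real \<Rightarrow> 'w \<Rightarrow> H"
  assumes a_pos: "\<And>k. a k > 0"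
    and a_sum: "summable (\<lambda>k. (1 + (real (Suc k))\<^sup>2) ^ 5 * (a k)\<^sup>2)"
    and sol: "\<And>z. inH z \<Longrightarrow> strong_solution M \<beta> a z (Y z)"
    and zs_H: "\<And>k. inH (zs k)" and z_H: "inH z"
    and conv: "(\<lambda>k. distH (zs k) z) \<longlonglongrightarrow> 0" and t: "t \<ge> 0"
  shows "AE \<omega> in M. (\<lambda>k. distH (Y (zs k) t \<omega>) (Y z t \<omega>)) \<longlonglongrightarrow> 0"
proof -
  have A1: "AE \<omega> in M. \<forall>k. sol_path a (\<lambda>t. \<beta> t \<omega>) (zs k) (\<lambda>t. Y (zs k) t \<omega>)"
    unfolding AE_all_countable using sol_AE[OF sol[OF zs_H]] by blast
  have A2: "AE \<omega> in M. sol_path a (\<lambda>t. \<beta> t \<omega>) z (\<lambda>t. Y z t \<omega>)" by (rule sol_AE[OF sol[OF z_H]])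
  have lim: "(\<lambda>k. Cst a z t * distH (zs k) z) \<longlonglongrightarrow> Cst a z t * 0"
    by (intro tendsto_mult tendsto_const conv)
  show ?thesis
  proof (rule AE_mp[OF AE_conj_iff[THEN iffD2, OF conjI[OF A1 A2]] AE_I2], intro impI)
    fix \<omega> assume "\<omega> \<in> space M" and
      S: "(\<forall>k. sol_path a (\<lambda>t. \<beta> t \<omega>) (zs k) (\<lambda>t. Y (zs k) t \<omega>)) \<and> sol_path a (\<lambda>t. \<beta> t \<omega>) z (\<lambda>t. Y z t \<omega>)"
    have ub: "distH (Y (zs k) t \<omega>) (Y z t \<omega>) \<le> Cst a z t * distH (zs k) z" for k
      using stab[OF a_pos a_sum conjunct2[OF S] conjunct1[OF S, rule_format, of k] z_H zs_H t]
      by (simp add: distH_sym)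
    have lb: "0 \<le> distH (Y (zs k) t \<omega>) (Y z t \<omega>)" for k
    proof -
      have "inH (Y (zs k) t \<omega>)" using S t by (simp add: sol_path_def)
      moreover have "inH (Y z t \<omega>)" using S t by (simp add: sol_path_def)
      ultimately show ?thesis by (rule distH_ge(5))
    qed
    show "(\<lambda>k. distH (Y (zs k) t \<omega>) (Y z t \<omega>)) \<longlonglongrightarrow> 0"
      by (rule tendsto_sandwich[OF always_eventually always_eventually tendsto_const, of _ _ "\<lambda>k. Cst a z t * distH (zs k) z"])
         (use lb ub lim in auto)
  qed
qed


theorem proposition2:
  fixes M :: "'w measure"
    and \<beta> :: "real \<Rightarrow> 'w \<Rightarrow> real"
    and a :: "nat \<Rightarrow> real"
    and Y :: "H \<Rightarrow> real \<Rightarrow> 'w \<Rightarrow> H"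
    and ys :: "nat \<Rightarrow> H"
    and y :: H
  assumes BM: "std_brownian_motion M \<beta>"
    and a_pos: "\<And>k. a k > 0"
    and a_sum: "summable (\<lambda>k. (1 + (real (Suc k))\<^sup>2) ^ 5 * (a k)\<^sup>2)"
    and sol: "\<And>z. inH z \<Longrightarrow> strong_solution M \<beta> a z (Y z)"
    and ys_H: "\<And>k. inH (ys k)"
    and y_H: "inH y"
    and conv: "(\<lambda>k. distH (ys k) y) \<longlonglongrightarrow> 0"
  shows "(\<forall>t>0. AE \<omega> in M. (\<lambda>k. (distH (Y (ys k) t \<omega>) (Y y t \<omega>))\<^sup>2) \<longlonglongrightarrow> 0)
       \<and> (\<forall>t\<ge>0. \<forall>\<phi>. contH \<phi> \<and> boundedH \<phi> \<longrightarrow>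
            contH (\<lambda>z. integral\<^sup>L M (\<lambda>\<omega>. \<phi> (Y z t \<omega>))) \<and>
            boundedH (\<lambda>z. integral\<^sup>L M (\<lambda>\<omega>. \<phi> (Y z t \<omega>))))"
proof (intro conjI allI impI)
  fix t :: real assume t: "t > 0"
  have t0: "t \<ge> 0" using t by simp
  have "AE \<omega> in M. (\<lambda>k. distH (Y (ys k) t \<omega>) (Y y t \<omega>)) \<longlonglongrightarrow> 0"
    by (rule conv_AE[OF a_pos a_sum sol ys_H y_H conv t0])
  then show "AE \<omega> in M. (\<lambda>k. (distH (Y (ys k) t \<omega>) (Y y t \<omega>))\<^sup>2) \<longlonglongrightarrow> 0"
  proof (rule AE_mp[OF _ AE_I2], intro impI)
    fix \<omega> assume "(\<lambda>k. distH (Y (ys k) t \<omega>) (Y y t \<omega>)) \<longlonglongrightarrow> 0"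
    from tendsto_power[OF this, of 2] show "(\<lambda>k. (distH (Y (ys k) t \<omega>) (Y y t \<omega>))\<^sup>2) \<longlonglongrightarrow> 0" by simp
  qed
next
  fix t :: real and \<phi> :: "H \<Rightarrow> real"
  assume t: "t \<ge> 0" and cb: "contH \<phi> \<and> boundedH \<phi>"
  have c: "contH \<phi>" using cb by simp
  obtain B where B: "\<And>y. inH y \<Longrightarrow> \<bar>\<phi> y\<bar> \<le> B" using cb unfolding boundedH_def by blast
  have P: "prob_space M" using BM by (simp add: std_brownian_motion_def)
  interpret prob_space M by (rule P)
  have YH: "\<And>z \<omega>. inH z \<Longrightarrow> \<omega> \<in> space M \<Longrightarrow> inH (Y z t \<omega>)"
    using sol t by (simp add: strong_solution_def)
  have meas: "(\<lambda>\<omega>. \<phi> (Y z t \<omega>)) \<in> borel_measurable M" if z: "inH z" for z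
  proof -
    have m: "(\<lambda>\<omega>. fst (Y z t \<omega>)) \<in> borel_measurable M"
      "\<And>k. (\<lambda>\<omega>. fst (snd (Y z t \<omega>)) k) \<in> borel_measurable M"
      "\<And>k. (\<lambda>\<omega>. snd (snd (Y z t \<omega>)) k) \<in> borel_measurable M"
      using sol[OF z] t by (simp_all add: strong_solution_def)
    show ?thesis by (rule meas_phi[OF c meas_H[OF m] YH[OF z]])
  qed
  have bnd: "AE \<omega> in M. norm (\<phi> (Y z t \<omega>)) \<le> B" if z: "inH z" for z
    by (rule AE_I2) (use B YH[OF z] in simp)
  have intg: "integrable M (\<lambda>\<omega>. \<phi> (Y z t \<omega>))" if z: "inH z" for z
    by (rule integrable_const_bound[OF bnd[OF z] meas[OF z]])
  have Ebnd: "\<bar>integral\<^sup>L M (\<lambda>\<omega>. \<phi> (Y z t \<omega>))\<bar> \<le> B" if z: "inH z" for z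
  proof -
    have pb: "\<phi> (Y z t \<omega>) \<le> B \<and> - B \<le> \<phi> (Y z t \<omega>)" if "\<omega> \<in> space M" for \<omega>
      using B[OF YH[OF z that]] by linarith
    have "integral\<^sup>L M (\<lambda>\<omega>. \<phi> (Y z t \<omega>)) \<le> integral\<^sup>L M (\<lambda>\<omega>. B)"
      by (rule integral_mono[OF intg[OF z] integrable_const]) (use pb in \<open>simp add: abs_le_iff\<close>)
    moreover have "integral\<^sup>L M (\<lambda>\<omega>. - B) \<le> integral\<^sup>L M (\<lambda>\<omega>. \<phi> (Y z t \<omega>))"
      by (rule integral_mono[OF integrable_const intg[OF z]]) (use pb in \<open>simp add: abs_le_iff\<close>)
    ultimately show ?thesis by (simp add: prob_space abs_le_iff)
  qed
  show "boundedH (\<lambda>z. integral\<^sup>L M (\<lambda>\<omega>. \<phi> (Y z t \<omega>)))"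
    unfolding boundedH_def using Ebnd by blast
  show "contH (\<lambda>z. integral\<^sup>L M (\<lambda>\<omega>. \<phi> (Y z t \<omega>)))"
    unfolding contH_def
  proof (intro allI impI)
    fix z :: H and e :: real assume z: "inH z" and e: "e > 0"
    define E where "E z = integral\<^sup>L M (\<lambda>\<omega>. \<phi> (Y z t \<omega>))" for z
    show "\<exists>d>0. \<forall>y'. inH y' \<and> distH y' z < d \<longrightarrow> \<bar>integral\<^sup>L M (\<lambda>\<omega>. \<phi> (Y y' t \<omega>)) - integral\<^sup>L M (\<lambda>\<omega>. \<phi> (Y z t \<omega>))\<bar> < e"
    proof (rule ccontr)
      assume "\<not> ?thesis"
      then have "\<forall>k. \<exists>y'. inH y' \<and> distH y' z < inverse (real (Suc k)) \<and> \<not> \<bar>E y' - E z\<bar> < e"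
        unfolding E_def by (metis inverse_positive_iff_positive of_nat_0_less_iff zero_less_Suc)
      then obtain zs where zs: "\<And>k. inH (zs k)" "\<And>k. distH (zs k) z < inverse (real (Suc k))"
        "\<And>k. \<not> \<bar>E (zs k) - E z\<bar> < e"
        by metis
      have dz: "(\<lambda>k. distH (zs k) z) \<longlonglongrightarrow> 0"
        by (rule tendsto_sandwich[OF always_eventually always_eventually tendsto_const LIMSEQ_inverse_real_of_nat])
           (use zs(2) distH_ge(5)[OF zs(1) z] less_imp_le in auto)
      have ae: "AE \<omega> in M. (\<lambda>k. distH (Y (zs k) t \<omega>) (Y z t \<omega>)) \<longlonglongrightarrow> 0"
        by (rule conv_AE[OF a_pos a_sum sol zs(1) z dz t])
      have ae2: "AE \<omega> in M. (\<lambda>k. \<phi> (Y (zs k) t \<omega>)) \<longlonglongrightarrow> \<phi> (Y z t \<omega>)"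
      proof (rule AE_mp[OF ae AE_I2], intro impI)
        fix \<omega> assume \<omega>: "\<omega> \<in> space M" and l: "(\<lambda>k. distH (Y (zs k) t \<omega>) (Y z t \<omega>)) \<longlonglongrightarrow> 0"
        show "(\<lambda>k. \<phi> (Y (zs k) t \<omega>)) \<longlonglongrightarrow> \<phi> (Y z t \<omega>)"
          by (rule contH_seq[OF c YH[OF z \<omega>] YH[OF zs(1) \<omega>] l])
      qed
      have "(\<lambda>k. E (zs k)) \<longlonglongrightarrow> E z"
        unfolding E_def
        by (rule integral_dominated_convergence[where w="\<lambda>_. B", OF meas[OF z] meas[OF zs(1)] integrable_const ae2 bnd[OF zs(1)]])
      then obtain no where "\<And>k. k \<ge> no \<Longrightarrow> norm (E (zs k) - E z) < e"
        using LIMSEQ_D[OF _ e] by blast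
      then show False using zs(3)[of no] by simp
    qed
  qed
qed


end
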